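(* Let $G$ be a connected threshold graph of order $n\ge 4$ and size $m$ with $n-1<m<\binom{n}{2}$, with $c$ type 1 vertices, backwards zero position sequence $(b_1,\ldots,b_z)$ and $F_1=\sum_{i=1}^z b_i^2$. Define $(\mathrm{LW}''_k)_{k\in\mathbb{N}_0}$ by $\mathrm{LW}''_0=1$ and \[\mathrm{LW}''_k=c\,\mathrm{LW}''_{k-1}+\sum_{r=0}^{k-3}\mathrm{LW}''_r\sum_{q\in\mathbb{N}_0}\binom{k-3-r-q}{q}F_1\Big(\sum_{i=1}^z b_i\Big)^q\qquad(k\in\mathbb{N}).\] Then for every $k\ge 3$, \[\mathrm{LW}''_k-(c+1)\mathrm{LW}''_{k-1}+\Big(c-\sum_{i=1}^z b_i\Big)\mathrm{LW}''_{k-2}+\Big(c\sum_{i=1}^z b_i-F_1\Big)\mathrm{LW}''_{k-3}=0.\]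
   Context: A threshold graph is a simple graph whose vertices can be ordered $v_1,\ldots,v_n$ so that for each $2\le i\le n$, $v_i$ is either adjacent to all of $v_1,\ldots,v_{i-1}$ (then $a_i=1$) or to none of them (then $a_i=0$); by convention $a_1=1$. Vertex $v_i$ is of type 1 if $a_i=1$ and of type 0 if $a_i=0$; $c$ and $z$ are the numbers of type 1 and type 0 vertices. The backwards zero position sequence $(b_1,\ldots,b_z)$ is defined by letting $b_i$ be the number of type 1 vertices appearing after the $i$-th type 0 vertex in the order $v_1,\ldots,v_n$. Binomial coefficients $\binom{a}{q}$ with integer $a$ and $q\in\mathbb{N}_0$ are taken to be $0$ whenever $a<q$. *)

theory Defs
  imports Main
begin

text \<open>A finite simple graph: vertex list vs (distinct, giving an ordering v_1..v_n as
 vs!0 .. vs!(n-1)) and a symmetric irreflexive edge relation E on set vs.\<close>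
definition simple_graph_on :: "'a list \<Rightarrow> ('a \<Rightarrow> 'a \<Rightarrow> bool) \<Rightarrow> bool" where
  "simple_graph_on vs E \<longleftrightarrow> distinct vs \<and>
     (\<forall>u v. E u v \<longrightarrow> u \<in> set vs \<and> v \<in> set vs \<and> u \<noteq> v \<and> E v u)"

definition threshold_order :: "'a list \<Rightarrow> ('a \<Rightarrow> 'a \<Rightarrow> bool) \<Rightarrow> bool" where
  "threshold_order vs E \<longleftrightarrow> (\<forall>i. 1 \<le> i \<and> i < length vs \<longrightarrow>
     (\<forall>j<i. E (vs!i) (vs!j)) \<or> (\<forall>j<i. \<not> E (vs!i) (vs!j)))"

text \<open>Type of the vertex at (0-based) position i: a_1 = 1 by convention, otherwise 1 iff
 adjacent to all previous vertices.\<close>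
definition vtype1 :: "'a list \<Rightarrow> ('a \<Rightarrow> 'a \<Rightarrow> bool) \<Rightarrow> nat \<Rightarrow> bool" where
  "vtype1 vs E i \<longleftrightarrow> i = 0 \<or> (\<forall>j<i. E (vs!i) (vs!j))"

definition num_type1 :: "'a list \<Rightarrow> ('a \<Rightarrow> 'a \<Rightarrow> bool) \<Rightarrow> nat" where
  "num_type1 vs E = card {i. i < length vs \<and> vtype1 vs E i}"

definition bzp_seq :: "'a list \<Rightarrow> ('a \<Rightarrow> 'a \<Rightarrow> bool) \<Rightarrow> nat list" where
  "bzp_seq vs E = map (\<lambda>j. card {k. j < k \<and> k < length vs \<and> vtype1 vs E k})
     (filter (\<lambda>j. \<not> vtype1 vs E j) [0..<length vs])"

definition graph_connected :: "'a list \<Rightarrow> ('a \<Rightarrow> 'a \<Rightarrow> bool) \<Rightarrow> bool" where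
  "graph_connected vs E \<longleftrightarrow> (\<forall>u\<in>set vs. \<forall>v\<in>set vs. E\<^sup>*\<^sup>* u v)"

definition graph_size :: "('a \<Rightarrow> 'a \<Rightarrow> bool) \<Rightarrow> nat" where
  "graph_size E = card {{u, v} | u v. E u v}"

end

theory Submission
  imports Defs
begin

definition gg :: "int \<Rightarrow> nat \<Rightarrow> int" where
  "gg S t = (\<Sum>q\<le>t. int ((t - q) choose q) * S ^ q)"

lemma gg_ext: "N \<ge> t \<Longrightarrow> gg S t = (\<Sum>q\<le>N. int ((t - q) choose q) * S ^ q)"
proof -
  assume "N \<ge> t"
  have "(\<Sum>q\<le>N. int ((t - q) choose q) * S ^ q) =
        (\<Sum>q\<le>t. int ((t - q) choose q) * S ^ q)"
  proof (rule sum.mono_neutral_right)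
    show "\<forall>i\<in>{..N} - {..t}. int ((t - i) choose i) * S ^ i = 0" by auto
  qed (use \<open>N \<ge> t\<close> in auto)
  then show ?thesis by (simp add: gg_def)
qed

lemma choose_aux: "((Suc t - q) choose (Suc q)) = ((t - q) choose q) + ((t - q) choose (Suc q))"
proof (cases "q \<le> t")
  case True
  then have "Suc t - q = Suc (t - q)" by simp
  then show ?thesis by simp
next
  case False
  then show ?thesis by simp
qed

lemma gg_rec: "gg S (Suc (Suc t)) = gg S (Suc t) + S * gg S t"
proof -
  have "gg S (Suc (Suc t)) = 1 + (\<Sum>q\<le>Suc t. int ((Suc t - q) choose (Suc q)) * S ^ Suc q)"
    unfolding gg_def by (subst sum.atMost_Suc_shift) simp
  also have "\<dots> = 1 + (\<Sum>q\<le>Suc t. int ((t - q) choose (Suc q)) * S ^ Suc q)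
      + S * (\<Sum>q\<le>Suc t. int ((t - q) choose q) * S ^ q)"
    by (simp add: choose_aux algebra_simps sum.distrib sum_distrib_left)
  also have "(\<Sum>q\<le>Suc t. int ((t - q) choose q) * S ^ q) = gg S t"
    by (rule gg_ext[symmetric]) simp
  also have "1 + (\<Sum>q\<le>Suc t. int ((t - q) choose (Suc q)) * S ^ Suc q) = gg S (Suc t)"
  proof -
    have "gg S (Suc t) = (\<Sum>q\<le>Suc (Suc t). int ((Suc t - q) choose q) * S ^ q)"
      by (rule gg_ext) simp
    also have "\<dots> = 1 + (\<Sum>q\<le>Suc t. int ((t - q) choose (Suc q)) * S ^ Suc q)"
      by (subst sum.atMost_Suc_shift) simp
    finally show ?thesis by simp
  qed
  finally show ?thesis .
qed

definition BB :: "(nat \<Rightarrow> int) \<Rightarrow> int \<Rightarrow> nat \<Rightarrow> int" where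
  "BB L S m = (\<Sum>r<m. L r * gg S (m - 1 - r))"

lemma gg0: "gg S 0 = 1" by (simp add: gg_def)
lemma gg1: "gg S (Suc 0) = 1" by (simp add: gg_def)

lemma BB_rec: "BB L S (Suc (Suc m)) = L (Suc m) + BB L S (Suc m) + S * BB L S m"
proof -
  have "BB L S (Suc (Suc m)) = L (Suc m) + L m + (\<Sum>r<m. L r * gg S (Suc (m - r)))"
  proof -
    have "(\<Sum>r<m. L r * gg S (Suc m - r)) = (\<Sum>r<m. L r * gg S (Suc (m - r)))"
      by (rule sum.cong) (auto simp: Suc_diff_le)
    then show ?thesis unfolding BB_def by (simp add: gg0 gg1)
  qed
  also have "(\<Sum>r<m. L r * gg S (Suc (m - r))) =
      (\<Sum>r<m. L r * gg S (m - r)) + S * (\<Sum>r<m. L r * gg S (m - 1 - r))"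
  proof -
    have "\<And>r. r < m \<Longrightarrow> L r * gg S (Suc (m - r)) = L r * gg S (m - r) + S * (L r * gg S (m - 1 - r))"
    proof -
      fix r assume "r < m"
      then have e: "m - r = Suc (m - 1 - r)" by simp
      show "L r * gg S (Suc (m - r)) = L r * gg S (m - r) + S * (L r * gg S (m - 1 - r))"
        by (subst e, subst e, subst gg_rec) (simp add: algebra_simps)
    qed
    then show ?thesis by (simp add: sum.distrib sum_distrib_left)
  qed
  finally have X: "BB L S (Suc (Suc m)) = L (Suc m) + L m +
      ((\<Sum>r<m. L r * gg S (m - r)) + S * (\<Sum>r<m. L r * gg S (m - 1 - r)))" .
  have Y: "L m + (\<Sum>r<m. L r * gg S (m - r)) = BB L S (Suc m)"
    unfolding BB_def by (simp add: gg0)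
  have Z: "(\<Sum>r<m. L r * gg S (m - 1 - r)) = BB L S m" unfolding BB_def by simp
  show ?thesis using X Y Z by simp
qed

theorem lemma5p3:
  fixes vs :: "'a list" and E :: "'a \<Rightarrow> 'a \<Rightarrow> bool"
    and n m c :: nat and b :: "nat list" and F1 :: nat
    and LW :: "nat \<Rightarrow> int" and k :: nat
  assumes "simple_graph_on vs E" and "threshold_order vs E" and "graph_connected vs E"
    and "n = length vs" and "m = graph_size E"
    and "n \<ge> 4" and "n - 1 < m" and "m < n choose 2"
    and "c = num_type1 vs E" and "b = bzp_seq vs E"
    and "F1 = (\<Sum>x\<leftarrow>b. x ^ 2)"
    and "LW 0 = 1"
    and rec: "\<And>j. j \<ge> 1 \<Longrightarrow> LW j = int c * LW (j - 1) +
           (\<Sum>r<j - 2. LW r * (\<Sum>q\<le>j - 3 - r.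
              int ((j - 3 - r - q) choose q) * int F1 * int (sum_list b) ^ q))"
    and "k \<ge> 3"
  shows "LW k - int (c + 1) * LW (k - 1) + (int c - int (sum_list b)) * LW (k - 2)
           + (int c * int (sum_list b) - int F1) * LW (k - 3) = 0"
proof -
  define S where "S = int (sum_list b)"
  define F where "F = int F1"
  have R: "LW j = int c * LW (j - 1) + F * BB LW S (j - 2)" if "j \<ge> 1" for j
  proof -
    have "(\<Sum>r<j - 2. LW r * (\<Sum>q\<le>j - 3 - r.
              int ((j - 3 - r - q) choose q) * int F1 * int (sum_list b) ^ q))
         = (\<Sum>r<j - 2. F * (LW r * gg S (j - 2 - 1 - r)))"
    proof (rule sum.cong)
      fix r assume "r \<in> {..<j - 2}"
      have e: "j - 2 - 1 - r = j - 3 - r" by simp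
      show "LW r * (\<Sum>q\<le>j - 3 - r.
              int ((j - 3 - r - q) choose q) * int F1 * int (sum_list b) ^ q)
         = F * (LW r * gg S (j - 2 - 1 - r))"
        unfolding e gg_def S_def F_def by (simp add: sum_distrib_left algebra_simps)
    qed simp
    then show ?thesis using rec[OF that] by (simp add: BB_def sum_distrib_left)
  qed
  obtain t where t: "k = t + 3" using \<open>k \<ge> 3\<close> by (metis add.commute le_Suc_ex)
  have B: "BB LW S (Suc t) = LW t + BB LW S t + S * BB LW S (t - 1)"
  proof (cases t)
    case 0 then show ?thesis by (simp add: BB_def gg0)
  next
    case (Suc t') then show ?thesis using BB_rec by simp
  qed
  have r3: "LW (t+3) = int c * LW (t+2) + F * BB LW S (Suc t)" using R[of "t+3"] by simp
  have r2: "LW (t+2) = int c * LW (t+1) + F * BB LW S t" using R[of "t+2"] by simp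
  have r1: "LW (t+1) = int c * LW t + F * BB LW S (t - 1)" using R[of "t+1"] by simp
  have "LW (t+3) - int (c + 1) * LW (t+2) + (int c - S) * LW (t+1) + (int c * S - F) * LW t
      = F * (BB LW S (Suc t) - BB LW S t - S * BB LW S (t - 1) - LW t)"
    using r1 r2 r3 by (simp add: algebra_simps)
  also have "\<dots> = 0" using B by simp
  finally show ?thesis using t by (simp add: S_def F_def)
qed

end
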